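(* Let $(X,d_1)$ and $(Y,d_2)$ be complete metric spaces, $k\ge2$, $0<\rho,\rho'<1$, and let $\mu:X^k\to X$ and $\nu:Y^k\to Y$ be nonexpansive $k$-means that are coordinatewise $\rho$-contractive and coordinatewise $\rho'$-contractive respectively. Equip $X\times Y$ with the sup metric $d((x,y),(x',y'))=\max\{d_1(x,x'),d_2(y,y')\}$. Then the product mean $\mu\times\nu$ is a nonexpansive, coordinatewise $\max\{\rho,\rho'\}$-contractive $k$-mean on $X\times Y$. Furthermore, for every $n\ge k$, the $n$-mean $(\mu\times\nu)_n$ obtained by iterated $\beta$-extension of $\mu\times\nu$ coincides with the product mean $\mu_n\times\nu_n$ of the iterated $\beta$-extensions $\mu_n,\nu_n$ of $\mu,\nu$.
   Context: A $k$-mean is a map $\mu:X^k\to X$ with $\mu(x,\ldots,x)=x$. Nonexpansive: $d(\mu(\mathbf{x}),\mu(\mathbf{y}))\le\max_j d(x_j,y_j)$; coordinatewise $\rho$-contractive: $d(\mu(\mathbf{x}),\mu(\mathbf{y}))\le\rho\,d(x_j,y_j)$ when $\mathbf{x},\mathbf{y}$ differ only in coordinate $j$. Product mean of $n$-means $\mu,\nu$: $(\mu\times\nu)((x_1,y_1),\ldots,(x_n,y_n))=(\mu(x_1,\ldots,x_n),\nu(y_1,\ldots,y_n))$. Barycentric operator of a $k$-mean: $\beta(\mathbf{x})_j=\mu(x_1,\ldots,\widehat{x_j},\ldots,x_{k+1})$; a $(k+1)$-mean $\tilde\mu$ $\beta$-extends $\mu$ if $\beta^m(\mathbf{x})\to(\tilde\mu(\mathbf{x}),\ldots,\tilde\mu(\mathbf{x}))$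 for all $\mathbf{x}$. For a nonexpansive coordinatewise $\rho$-contractive $k$-mean $\mu$ on a complete metric space, $\mu_k=\mu$ and $\mu_{n+1}$ denotes the unique continuous $\beta$-extension of $\mu_n$ (these exist for all $n\ge k$). *)

theory Defs
  imports "HOL-Analysis.Analysis"
begin

text \<open>Points of X^k are represented as lists of length k with entries in the carrier X.
  A metric space is an abstract metric space (carrier X, metric d), see Metric_space.\<close>

definition tuples :: "'a set \<Rightarrow> nat \<Rightarrow> 'a list set" where
  "tuples X k = {xs. length xs = k \<and> set xs \<subseteq> X}"

definition is_mean :: "'a set \<Rightarrow> nat \<Rightarrow> ('a list \<Rightarrow> 'a) \<Rightarrow> bool" where
  "is_mean X k \<mu> \<longleftrightarrow> (\<forall>xs\<in>tuples X k. \<mu> xs \<in> X) \<and> (\<forall>x\<in>X. \<mu> (replicate k x) = x)"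

definition nonexpansive_mean ::
  "'a set \<Rightarrow> ('a \<Rightarrow> 'a \<Rightarrow> real) \<Rightarrow> nat \<Rightarrow> ('a list \<Rightarrow> 'a) \<Rightarrow> bool" where
  "nonexpansive_mean X d k \<mu> \<longleftrightarrow>
     (\<forall>xs\<in>tuples X k. \<forall>ys\<in>tuples X k.
        d (\<mu> xs) (\<mu> ys) \<le> Max {d (xs!j) (ys!j) | j. j < k})"

definition coord_contractive ::
  "'a set \<Rightarrow> ('a \<Rightarrow> 'a \<Rightarrow> real) \<Rightarrow> nat \<Rightarrow> real \<Rightarrow> ('a list \<Rightarrow> 'a) \<Rightarrow> bool" where
  "coord_contractive X d k \<rho> \<mu> \<longleftrightarrow>
     (\<forall>xs\<in>tuples X k. \<forall>ys\<in>tuples X k. \<forall>j<k.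
        (\<forall>i<k. i \<noteq> j \<longrightarrow> xs!i = ys!i) \<longrightarrow> d (\<mu> xs) (\<mu> ys) \<le> \<rho> * d (xs!j) (ys!j))"

definition remove_nth :: "nat \<Rightarrow> 'a list \<Rightarrow> 'a list" where
  "remove_nth j xs = take j xs @ drop (Suc j) xs"

definition barycentric :: "('a list \<Rightarrow> 'a) \<Rightarrow> 'a list \<Rightarrow> 'a list" where
  "barycentric \<mu> xs = map (\<lambda>j. \<mu> (remove_nth j xs)) [0..<length xs]"

definition beta_extends ::
  "'a set \<Rightarrow> ('a \<Rightarrow> 'a \<Rightarrow> real) \<Rightarrow> nat \<Rightarrow> ('a list \<Rightarrow> 'a) \<Rightarrow> ('a list \<Rightarrow> 'a) \<Rightarrow> bool" where
  "beta_extends X d k \<mu> \<mu>' \<longleftrightarrow>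
     (\<forall>xs\<in>tuples X (Suc k). \<forall>i<Suc k.
        (\<lambda>m. d (((barycentric \<mu> ^^ m) xs) ! i) (\<mu>' xs)) \<longlonglongrightarrow> 0)"

definition continuous_mean ::
  "'a set \<Rightarrow> ('a \<Rightarrow> 'a \<Rightarrow> real) \<Rightarrow> nat \<Rightarrow> ('a list \<Rightarrow> 'a) \<Rightarrow> bool" where
  "continuous_mean X d n \<mu> \<longleftrightarrow>
     (\<forall>xs\<in>tuples X n. \<forall>e>0. \<exists>\<delta>>0. \<forall>ys\<in>tuples X n.
        (\<forall>i<n. d (xs!i) (ys!i) < \<delta>) \<longrightarrow> d (\<mu> xs) (\<mu> ys) < e)"

text \<open>The unique continuous beta-extension, taken extensional (undefined off X^(k+1))
  so that it is uniquely determined as a HOL function.\<close>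
definition beta_ext ::
  "'a set \<Rightarrow> ('a \<Rightarrow> 'a \<Rightarrow> real) \<Rightarrow> nat \<Rightarrow> ('a list \<Rightarrow> 'a) \<Rightarrow> ('a list \<Rightarrow> 'a)" where
  "beta_ext X d k \<mu> = (THE \<mu>'. is_mean X (Suc k) \<mu>' \<and> continuous_mean X d (Suc k) \<mu>'
       \<and> beta_extends X d k \<mu> \<mu>' \<and> (\<forall>xs. xs \<notin> tuples X (Suc k) \<longrightarrow> \<mu>' xs = undefined))"

text \<open>iter_ext X d k \<mu> m is the (k+m)-mean \<mu>_(k+m).\<close>
primrec iter_ext ::
  "'a set \<Rightarrow> ('a \<Rightarrow> 'a \<Rightarrow> real) \<Rightarrow> nat \<Rightarrow> ('a list \<Rightarrow> 'a) \<Rightarrow> nat \<Rightarrow> ('a list \<Rightarrow> 'a)" where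
  "iter_ext X d k \<mu> 0 = \<mu>"
| "iter_ext X d k \<mu> (Suc m) = beta_ext X d (k + m) (iter_ext X d k \<mu> m)"

definition prod_mean :: "('a list \<Rightarrow> 'a) \<Rightarrow> ('b list \<Rightarrow> 'b) \<Rightarrow> ('a \<times> 'b) list \<Rightarrow> 'a \<times> 'b" where
  "prod_mean \<mu> \<nu> zs = (\<mu> (map fst zs), \<nu> (map snd zs))"

definition sup_dist :: "('a \<Rightarrow> 'a \<Rightarrow> real) \<Rightarrow> ('b \<Rightarrow> 'b \<Rightarrow> real) \<Rightarrow> 'a \<times> 'b \<Rightarrow> 'a \<times> 'b \<Rightarrow> real" where
  "sup_dist d1 d2 p q = max (d1 (fst p) (fst q)) (d2 (snd p) (snd q))"

end

theory Submission
  imports Defs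
begin


lemma length_remove_nth[simp]: "j < length xs \<Longrightarrow> length (remove_nth j xs) = length xs - 1"
  by (simp add: remove_nth_def)

lemma nth_remove_nth: "j < length xs \<Longrightarrow> l < length xs - 1 \<Longrightarrow>
   remove_nth j xs ! l = (if l < j then xs ! l else xs ! Suc l)"
  by (auto simp: remove_nth_def nth_append min_def)

lemma set_remove_nth: "set (remove_nth j xs) \<subseteq> set xs"
  unfolding remove_nth_def by (auto dest: in_set_takeD in_set_dropD)

lemma map_remove_nth: "map f (remove_nth j xs) = remove_nth j (map f xs)"
  by (simp add: remove_nth_def take_map drop_map)

lemma length_barycentric[simp]: "length (barycentric f xs) = length xs"
  by (simp add: barycentric_def)

lemma nth_barycentric[simp]: "i < length xs \<Longrightarrow> barycentric f xs ! i = f (remove_nth i xs)"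
  by (simp add: barycentric_def)

lemma tuplesI: "length xs = n \<Longrightarrow> (\<And>i. i < n \<Longrightarrow> xs ! i \<in> X) \<Longrightarrow> xs \<in> tuples X n"
  by (auto simp: tuples_def in_set_conv_nth)

lemma tuplesD: "xs \<in> tuples X n \<Longrightarrow> length xs = n"  "xs \<in> tuples X n \<Longrightarrow> i < n \<Longrightarrow> xs ! i \<in> X"
  by (auto simp: tuples_def)

lemma remove_nth_tuples: "xs \<in> tuples X (Suc n) \<Longrightarrow> j < Suc n \<Longrightarrow> remove_nth j xs \<in> tuples X n"
  using set_remove_nth[of j xs] by (auto simp: tuples_def)

lemma replicate_tuples: "x \<in> X \<Longrightarrow> replicate n x \<in> tuples X n"
  by (auto simp: tuples_def)

lemma bary_tuples: "is_mean X n f \<Longrightarrow> xs \<in> tuples X (Suc n) \<Longrightarrow> barycentric f xs \<in> tuples X (Suc n)"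
  by (rule tuplesI) (auto simp: tuplesD is_mean_def remove_nth_tuples)

lemma bary_pow_tuples: "is_mean X n f \<Longrightarrow> xs \<in> tuples X (Suc n) \<Longrightarrow> (barycentric f ^^ m) xs \<in> tuples X (Suc n)"
  by (induction m) (auto intro: bary_tuples)

lemma Max_set_eq: "{f j | j. j < n} = f ` {..<n}" by auto

lemma Max_le_iff': "0 < n \<Longrightarrow> Max {f j | j. j < (n::nat)} \<le> (c::real) \<longleftrightarrow> (\<forall>j<n. f j \<le> c)"
  unfolding Max_set_eq by (subst Max_le_iff) auto

lemma Max_ge': "j < n \<Longrightarrow> (f j::real) \<le> Max {f j | j. j < (n::nat)}"
  unfolding Max_set_eq by (rule Max_ge) auto

lemma Max_less_iff': "0 < n \<Longrightarrow> Max {f j | j. j < (n::nat)} < (c::real) \<longleftrightarrow> (\<forall>j<n. f j < c)"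
  unfolding Max_set_eq by (subst Max_less_iff) auto

lemma nonexp_continuous:
  assumes "nonexpansive_mean X d n f" "0 < n"
  shows "continuous_mean X d n f"
  unfolding continuous_mean_def
proof (intro ballI allI impI)
  fix xs e assume xs: "xs \<in> tuples X n" and e: "(e::real) > 0"
  show "\<exists>\<delta>>0. \<forall>ys\<in>tuples X n. (\<forall>i<n. d (xs ! i) (ys ! i) < \<delta>) \<longrightarrow> d (f xs) (f ys) < e"
  proof (intro exI[of _ e] conjI ballI impI e)
    fix ys assume ys: "ys \<in> tuples X n" and h: "\<forall>i<n. d (xs ! i) (ys ! i) < e"
    have "Max {d (xs!j) (ys!j) | j. j < n} < e" using h assms(2) by (subst Max_less_iff') auto
    moreover have "d (f xs) (f ys) \<le> Max {d (xs!j) (ys!j) | j. j < n}"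
      using assms(1) xs ys by (auto simp: nonexpansive_mean_def)
    ultimately show "d (f xs) (f ys) < e" by linarith
  qed
qed

definition bpred where
  "bpred X d k \<mu> \<mu>' \<longleftrightarrow> is_mean X (Suc k) \<mu>' \<and> continuous_mean X d (Suc k) \<mu>'
       \<and> beta_extends X d k \<mu> \<mu>' \<and> (\<forall>xs. xs \<notin> tuples X (Suc k) \<longrightarrow> \<mu>' xs = undefined)"

lemma beta_ext_bpred: "beta_ext X d k \<mu> = The (bpred X d k \<mu>)"
  unfolding beta_ext_def bpred_def by simp

context Metric_space
begin

lemma lim_le:
  assumes "\<And>m. a m \<in> M" "\<And>m. b m \<in> M" "l \<in> M" "l' \<in> M"
    "(\<lambda>m. d (a m) l) \<longlonglongrightarrow> 0" "(\<lambda>m. d (b m) l') \<longlonglongrightarrow> 0" "\<And>m. d (a m) (b m) \<le> c"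
  shows "d l l' \<le> c"
proof -
  have "(\<lambda>m. c + (d (a m) l + d (b m) l')) \<longlonglongrightarrow> c + (0 + 0)"
    by (intro tendsto_intros assms)
  moreover have "d l l' \<le> c + (d (a m) l + d (b m) l')" for m
  proof -
    have "d l l' \<le> d l (a m) + d (a m) l'" using triangle assms by blast
    also have "d (a m) l' \<le> d (a m) (b m) + d (b m) l'" using triangle assms by blast
    finally show ?thesis using assms(7)[of m] commute[of l "a m"] by linarith
  qed
  ultimately show ?thesis
    by (intro LIMSEQ_le[OF tendsto_const]) auto
qed

lemma lim_unique:
  assumes "\<And>m. a m \<in> M" "l \<in> M" "l' \<in> M"
    "(\<lambda>m. d (a m) l) \<longlonglongrightarrow> 0" "(\<lambda>m. d (a m) l') \<longlonglongrightarrow> 0"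
  shows "l = l'"
proof -
  have "d l l' \<le> 0" by (rule lim_le[of a a]) (use assms in auto)
  then show ?thesis using nonneg[of l l'] assms by simp
qed

lemma bpred_unique:
  assumes mean: "is_mean M k mu" and f: "bpred M d k mu f" and g: "bpred M d k mu g"
  shows "f = g"
proof
  fix xs
  show "f xs = g xs"
  proof (cases "xs \<in> tuples M (Suc k)")
    case False then show ?thesis using f g by (simp add: bpred_def)
  next
    case True
    show ?thesis
    proof (rule lim_unique[of "\<lambda>m. (barycentric mu ^^ m) xs ! 0"])
      show "(barycentric mu ^^ m) xs ! 0 \<in> M" for m
        using tuplesD(2)[OF bary_pow_tuples[OF mean True], of 0] by simp
      show "f xs \<in> M" "g xs \<in> M" using f g True by (auto simp: bpred_def is_mean_def)
      show "(\<lambda>m. d ((barycentric mu ^^ m) xs ! 0) (f xs)) \<longlonglongrightarrow> 0"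
           "(\<lambda>m. d ((barycentric mu ^^ m) xs ! 0) (g xs)) \<longlonglongrightarrow> 0"
        using f g True by (auto simp: bpred_def beta_extends_def)
    qed
  qed
qed

lemma beta_ext_eq:
  assumes "is_mean M k mu" "bpred M d k mu f"
  shows "beta_ext M d k mu = f"
  unfolding beta_ext_bpred
  by (rule the_equality) (use assms bpred_unique in blast)+

end



locale bext = Metric_space M d for M :: "'a set" and d +
  fixes mu :: "'a list \<Rightarrow> 'a" and k :: nat and r :: real
  assumes mean: "is_mean M k mu" and nexp: "nonexpansive_mean M d k mu"
    and cc: "coord_contractive M d k r mu" and r0: "0 < r" and r1: "r < 1" and k1: "1 \<le> k"
    and compl: "mcomplete"
begin

abbreviation "T \<equiv> tuples M (Suc k)"
abbreviation "bary \<equiv> barycentric mu"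
abbreviation "B m xs \<equiv> (bary ^^ m) xs"

lemma B_T: "xs \<in> T \<Longrightarrow> B m xs \<in> T"
  by (rule bary_pow_tuples[OF mean])

lemma B_M: "xs \<in> T \<Longrightarrow> i \<le> k \<Longrightarrow> B m xs ! i \<in> M"
  by (rule tuplesD(2)[OF B_T]) auto

lemma T_M: "xs \<in> T \<Longrightarrow> i \<le> k \<Longrightarrow> xs ! i \<in> M"
  by (rule tuplesD(2)) auto

lemma adj_step:
  assumes xs: "xs \<in> T" and i: "i < k"
  shows "d (bary xs ! i) (bary xs ! Suc i) \<le> r * d (xs!i) (xs!Suc i)"
proof -
  have len: "length xs = Suc k" using xs tuplesD by blast
  have r1: "remove_nth i xs \<in> tuples M k" and r2: "remove_nth (Suc i) xs \<in> tuples M k"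
    using remove_nth_tuples[OF xs] i by auto
  have eq: "\<forall>l<k. l \<noteq> i \<longrightarrow> remove_nth i xs ! l = remove_nth (Suc i) xs ! l"
    using i len by (auto simp: nth_remove_nth)
  have "d (mu (remove_nth i xs)) (mu (remove_nth (Suc i) xs))
        \<le> r * d (remove_nth i xs ! i) (remove_nth (Suc i) xs ! i)"
    using cc r1 r2 i eq unfolding coord_contractive_def by blast
  moreover have "remove_nth i xs ! i = xs ! Suc i" "remove_nth (Suc i) xs ! i = xs ! i"
    using i len by (auto simp: nth_remove_nth)
  ultimately show ?thesis using i len commute by simp
qed

lemma adj_iter:
  assumes xs: "xs \<in> T" and c: "\<forall>i<k. d (xs!i) (xs!Suc i) \<le> c"
  shows "\<forall>i<k. d (B m xs ! i) (B m xs ! Suc i) \<le> r^m * c"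
proof (induction m)
  case 0 then show ?case using c by simp
next
  case (Suc m)
  show ?case
  proof (intro allI impI)
    fix i assume i: "i < k"
    have "d (B (Suc m) xs ! i) (B (Suc m) xs ! Suc i) \<le> r * d (B m xs ! i) (B m xs ! Suc i)"
      using adj_step[OF B_T[OF xs] i] by simp
    also have "\<dots> \<le> r * (r^m * c)" using Suc i r0 by (intro mult_left_mono) auto
    finally show "d (B (Suc m) xs ! i) (B (Suc m) xs ! Suc i) \<le> r ^ Suc m * c" by simp
  qed
qed

lemma diam_aux:
  assumes ys: "ys \<in> T" and c: "\<forall>i<k. d (ys!i) (ys!Suc i) \<le> c" and ij: "i \<le> j" "j \<le> k"
  shows "d (ys!i) (ys!j) \<le> real (j - i) * c"
  using ij
proof (induction j)
  case 0 then show ?case using T_M[OF ys, of i] by simp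
next
  case (Suc j)
  show ?case
  proof (cases "i = Suc j")
    case True then show ?thesis using T_M[OF ys, of i] Suc by simp
  next
    case False
    then have ij': "i \<le> j" using Suc by simp
    have "d (ys!i) (ys!Suc j) \<le> d (ys!i) (ys!j) + d (ys!j) (ys!Suc j)"
      using triangle T_M[OF ys] Suc ij' by simp
    also have "\<dots> \<le> real (j - i) * c + c" using Suc ij' c by (intro add_mono) auto
    also have "\<dots> = real (Suc j - i) * c" using ij' by (simp add: Suc_diff_le algebra_simps)
    finally show ?thesis .
  qed
qed

lemma diam:
  assumes ys: "ys \<in> T" and c: "\<forall>i<k. d (ys!i) (ys!Suc i) \<le> c" and ij: "i \<le> k" "j \<le> k"
  shows "d (ys!i) (ys!j) \<le> real k * c"
proof -
  have "d (ys!0) (ys!Suc 0) \<le> c" using c k1 by auto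
  then have c0: "0 \<le> c" using nonneg[of "ys!0" "ys!Suc 0"] by linarith
  show ?thesis
  proof (cases "i \<le> j")
    case True
    have "d (ys!i) (ys!j) \<le> real (j - i) * c" using diam_aux[OF ys c True ij(2)] .
    also have "\<dots> \<le> real k * c" using c0 ij by (intro mult_right_mono) auto
    finally show ?thesis .
  next
    case False
    have "d (ys!j) (ys!i) \<le> real (i - j) * c" using diam_aux[OF ys c _ ij(1)] False by simp
    also have "\<dots> \<le> real k * c" using c0 ij by (intro mult_right_mono) auto
    finally show ?thesis by (simp add: commute)
  qed
qed

lemma step_close:
  assumes ys: "ys \<in> T" and D: "\<forall>i\<le>k. \<forall>j\<le>k. d (ys!i) (ys!j) \<le> D" and i: "i \<le> k"
  shows "d (bary ys ! i) (ys!i) \<le> D"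
proof -
  have len: "length ys = Suc k" using ys tuplesD by blast
  have r1: "remove_nth i ys \<in> tuples M k" using remove_nth_tuples[OF ys] i by auto
  have r2: "replicate k (ys!i) \<in> tuples M k" using T_M[OF ys i] by (rule replicate_tuples)
  have "d (mu (remove_nth i ys)) (mu (replicate k (ys!i)))
     \<le> Max {d (remove_nth i ys ! j) (replicate k (ys!i) ! j) | j. j < k}"
    using nexp r1 r2 unfolding nonexpansive_mean_def by blast
  also have "\<dots> \<le> D"
    using k1 i len D by (subst Max_le_iff') (auto simp: nth_remove_nth commute)
  finally show ?thesis using mean T_M[OF ys i] i len by (simp add: is_mean_def)
qed

definition C0 :: "'a list \<Rightarrow> real" where "C0 xs = (\<Sum>i<k. d (xs!i) (xs!Suc i))"
definition E :: "'a list \<Rightarrow> real" where "E xs = real k * C0 xs"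

lemma C0: "\<forall>i<k. d (xs!i) (xs!Suc i) \<le> C0 xs"
  unfolding C0_def by (auto intro!: member_le_sum)

lemma E_nonneg: "0 \<le> E xs" unfolding E_def C0_def by (intro mult_nonneg_nonneg sum_nonneg) auto

lemma diam_B:
  assumes xs: "xs \<in> T" and ij: "i \<le> k" "j \<le> k"
  shows "d (B m xs ! i) (B m xs ! j) \<le> E xs * r^m"
  using diam[OF B_T[OF xs] adj_iter[OF xs C0] ij] by (simp add: E_def algebra_simps)

lemma step_B:
  assumes xs: "xs \<in> T" and i: "i \<le> k"
  shows "d (B (Suc m) xs ! i) (B m xs ! i) \<le> E xs * r^m"
proof -
  have "d (bary (B m xs) ! i) (B m xs ! i) \<le> E xs * r^m"
    by (rule step_close[OF B_T[OF xs] _ i]) (use diam_B[OF xs] in auto)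
  then show ?thesis by simp
qed

lemma cauchy_bound:
  assumes xs: "xs \<in> T" and i: "i \<le> k" and mm: "m \<le> m'"
  shows "d (B m xs ! i) (B m' xs ! i) \<le> E xs / (1 - r) * (r^m - r^m')"
  using mm
proof (induction m')
  case 0 then show ?case using T_M[OF xs i] by simp
next
  case (Suc m')
  show ?case
  proof (cases "m = Suc m'")
    case True then show ?thesis using B_M[OF xs i, of m] by simp
  next
    case False
    then have 2: "m \<le> m'" using Suc by simp
  have "d (B m xs ! i) (B (Suc m') xs ! i) \<le> d (B m xs ! i) (B m' xs ! i) + d (B m' xs ! i) (B (Suc m') xs ! i)"
    using triangle B_M[OF xs i] by blast
  also have "\<dots> \<le> E xs / (1 - r) * (r^m - r^m') + E xs * r^m'"
    using 2 Suc step_B[OF xs i, of m'] by (intro add_mono) (auto simp: commute)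
  also have "\<dots> = E xs / (1 - r) * (r^m - r^Suc m')"
    using r1 by (simp add: field_simps)
  finally show ?thesis .
  qed
qed

lemma cauchy_bound2:
  assumes xs: "xs \<in> T" and i: "i \<le> k" and mm: "m \<le> m'"
  shows "d (B m xs ! i) (B m' xs ! i) \<le> E xs / (1 - r) * r^m"
proof -
  have "E xs / (1 - r) * (r^m - r^m') \<le> E xs / (1 - r) * r^m"
    using E_nonneg[of xs] r0 r1 by (intro mult_left_mono) auto
  then show ?thesis using cauchy_bound[OF assms] by linarith
qed

lemma B_cauchy:
  assumes xs: "xs \<in> T" and i: "i \<le> k"
  shows "MCauchy (\<lambda>m. B m xs ! i)"
  unfolding MCauchy_def
proof (intro conjI allI impI)
  show "range (\<lambda>m. B m xs ! i) \<subseteq> M" using B_M[OF xs i] by auto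
  fix e :: real assume e: "e > 0"
  define F where "F = E xs / (1 - r)"
  have F0: "0 \<le> F" unfolding F_def using E_nonneg[of xs] r1 by simp
  obtain N where N: "r^N < e / (F + 1)" using real_arch_pow_inv[of "e / (F+1)" r] e F0 r1 by auto
  have FN: "F * r^N < e"
  proof -
    have "F * r^N \<le> (F + 1) * r^N" using r0 by (intro mult_right_mono) auto
    also have "\<dots> < (F + 1) * (e / (F + 1))" using N F0 by (intro mult_strict_left_mono) auto
    finally show ?thesis using F0 by simp
  qed
  have bnd: "d (B n xs ! i) (B n' xs ! i) \<le> F * r^N" if "N \<le> n" "n \<le> n'" for n n'
  proof -
    have "d (B n xs ! i) (B n' xs ! i) \<le> F * r^n" using cauchy_bound2[OF xs i that(2)] F_def by simp
    also have "\<dots> \<le> F * r^N" using F0 r0 r1 that by (intro mult_left_mono power_decreasing) auto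
    finally show ?thesis .
  qed
  show "\<exists>N. \<forall>n n'. N \<le> n \<longrightarrow> N \<le> n' \<longrightarrow> d (B n xs ! i) (B n' xs ! i) < e"
  proof (intro exI allI impI)
    fix n n' assume nN: "N \<le> n" and nN': "N \<le> n'"
    have "d (B n xs ! i) (B n' xs ! i) \<le> F * r^N"
    proof (cases "n \<le> n'")
      case True from bnd[OF nN True] show ?thesis .
    next
      case False then have "n' \<le> n" by simp
      from bnd[OF nN' this] show ?thesis by (simp add: commute)
    qed
    then show "d (B n xs ! i) (B n' xs ! i) < e" using FN by linarith
  qed
qed

end



context bext
begin

lemma B_limit:
  assumes xs: "xs \<in> T"
  shows "\<exists>l. l \<in> M \<and> (\<lambda>m. d (B m xs ! 0) l) \<longlonglongrightarrow> 0"
proof -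
  obtain l where "limitin mtopology (\<lambda>m. B m xs ! 0) l sequentially"
    using compl B_cauchy[OF xs, of 0] unfolding mcomplete_def by blast
  then show ?thesis by (auto simp: limitin_metric_dist_null)
qed

definition L :: "'a list \<Rightarrow> 'a" where
  "L xs = (if xs \<in> T then (SOME l. l \<in> M \<and> (\<lambda>m. d (B m xs ! 0) l) \<longlonglongrightarrow> 0) else undefined)"

lemma L_prop:
  assumes xs: "xs \<in> T"
  shows "L xs \<in> M" "(\<lambda>m. d (B m xs ! 0) (L xs)) \<longlonglongrightarrow> 0"
  using someI_ex[OF B_limit[OF xs]] xs by (auto simp: L_def)

lemma Er_zero: "(\<lambda>m. E xs * r^m) \<longlonglongrightarrow> 0"
  using r0 r1 by (intro tendsto_mult_right_zero LIMSEQ_power_zero) auto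

lemma L_all:
  assumes xs: "xs \<in> T" and i: "i \<le> k"
  shows "(\<lambda>m. d (B m xs ! i) (L xs)) \<longlonglongrightarrow> 0"
proof (rule tendsto_sandwich[of "\<lambda>_. 0" _ _ "\<lambda>m. E xs * r^m + d (B m xs ! 0) (L xs)"])
  show "\<forall>\<^sub>F n in sequentially. 0 \<le> d (B n xs ! i) (L xs)" by simp
  show "\<forall>\<^sub>F n in sequentially. d (B n xs ! i) (L xs) \<le> E xs * r ^ n + d (B n xs ! 0) (L xs)"
  proof (intro always_eventually allI)
    fix n
    have "d (B n xs ! i) (L xs) \<le> d (B n xs ! i) (B n xs ! 0) + d (B n xs ! 0) (L xs)"
      using triangle B_M[OF xs] i L_prop[OF xs] by simp
    also have "\<dots> \<le> E xs * r ^ n + d (B n xs ! 0) (L xs)"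
      using diam_B[OF xs i, of 0 n] by simp
    finally show "d (B n xs ! i) (L xs) \<le> E xs * r ^ n + d (B n xs ! 0) (L xs)" .
  qed
  show "(\<lambda>m. E xs * r ^ m + d (B m xs ! 0) (L xs)) \<longlonglongrightarrow> 0"
    using tendsto_add[OF Er_zero L_prop(2)[OF xs]] by simp
qed simp

lemma close_step:
  assumes xs: "xs \<in> T" and ys: "ys \<in> T" and c: "\<forall>i\<le>k. d (xs!i) (ys!i) \<le> c"
  shows "\<forall>i\<le>k. d (bary xs ! i) (bary ys ! i) \<le> c"
proof (intro allI impI)
  fix i assume i: "i \<le> k"
  have lx: "length xs = Suc k" and ly: "length ys = Suc k" using xs ys tuplesD by blast+
  have r1: "remove_nth i xs \<in> tuples M k" "remove_nth i ys \<in> tuples M k"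
    using remove_nth_tuples[OF xs] remove_nth_tuples[OF ys] i by auto
  have "d (mu (remove_nth i xs)) (mu (remove_nth i ys))
     \<le> Max {d (remove_nth i xs ! j) (remove_nth i ys ! j) | j. j < k}"
    using nexp r1 unfolding nonexpansive_mean_def by blast
  also have "\<dots> \<le> c"
    using k1 i lx ly c by (subst Max_le_iff') (auto simp: nth_remove_nth)
  finally show "d (bary xs ! i) (bary ys ! i) \<le> c" using i lx ly by simp
qed

lemma close_iter:
  assumes xs: "xs \<in> T" and ys: "ys \<in> T" and c: "\<forall>i\<le>k. d (xs!i) (ys!i) \<le> c"
  shows "\<forall>i\<le>k. d (B m xs ! i) (B m ys ! i) \<le> c"
  by (induction m) (use c close_step[OF B_T[OF xs] B_T[OF ys]] in auto)

lemma L_nonexp: "nonexpansive_mean M d (Suc k) L"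
  unfolding nonexpansive_mean_def
proof (intro ballI)
  fix xs ys assume xs: "xs \<in> T" and ys: "ys \<in> T"
  define c where "c = Max {d (xs!j) (ys!j) | j. j < Suc k}"
  have "\<forall>i\<le>k. d (xs!i) (ys!i) \<le> c" unfolding c_def by (auto intro: Max_ge')
  from close_iter[OF xs ys this] have hc: "d (B m xs ! 0) (B m ys ! 0) \<le> c" for m by simp
  have "d (L xs) (L ys) \<le> c"
    by (rule lim_le[OF B_M[OF xs le0] B_M[OF ys le0] L_prop(1)[OF xs] L_prop(1)[OF ys]
          L_prop(2)[OF xs] L_prop(2)[OF ys] hc])
  then show "d (L xs) (L ys) \<le> Max {d (xs!j) (ys!j) | j. j < Suc k}" by (simp add: c_def)
qed

lemma contr_step:
  assumes xs: "xs \<in> T" and ys: "ys \<in> T" and j: "j < Suc k"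
    and eq: "\<forall>i<Suc k. i \<noteq> j \<longrightarrow> xs!i = ys!i"
  shows "\<forall>i\<le>k. d (bary xs ! i) (bary ys ! i) \<le> r * d (xs!j) (ys!j)"
proof (intro allI impI)
  fix i assume i: "i \<le> k"
  have lx: "length xs = Suc k" and ly: "length ys = Suc k" using xs ys tuplesD by blast+
  have r1: "remove_nth i xs \<in> tuples M k" "remove_nth i ys \<in> tuples M k"
    using remove_nth_tuples[OF xs] remove_nth_tuples[OF ys] i by auto
  show "d (bary xs ! i) (bary ys ! i) \<le> r * d (xs!j) (ys!j)"
  proof (cases "i = j")
    case True
    have "remove_nth i xs = remove_nth i ys"
      by (rule nth_equalityI) (use lx ly i eq True in \<open>auto simp: nth_remove_nth\<close>)
    moreover have "0 \<le> r * d (xs!j) (ys!j)" using r0 by simp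
    ultimately show ?thesis using i lx ly r1 mean by (simp add: is_mean_def)
  next
    case False
    define j' where "j' = (if j < i then j else j - 1)"
    have j': "j' < k" using False i j unfolding j'_def by auto
    have "\<forall>l<k. l \<noteq> j' \<longrightarrow> remove_nth i xs ! l = remove_nth i ys ! l"
      using lx ly i eq False unfolding j'_def by (auto simp: nth_remove_nth)
    then have "d (mu (remove_nth i xs)) (mu (remove_nth i ys))
       \<le> r * d (remove_nth i xs ! j') (remove_nth i ys ! j')"
      using cc r1 j' unfolding coord_contractive_def by blast
    moreover have "remove_nth i xs ! j' = xs ! j" "remove_nth i ys ! j' = ys ! j"
      using lx ly i j j' False unfolding j'_def by (auto simp: nth_remove_nth)
    ultimately show ?thesis using i lx ly by simp
  qed
qed

lemma L_contr: "coord_contractive M d (Suc k) r L"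
  unfolding coord_contractive_def
proof (intro ballI allI impI)
  fix xs ys j assume xs: "xs \<in> T" and ys: "ys \<in> T" and j: "j < Suc k"
    and eq: "\<forall>i<Suc k. i \<noteq> j \<longrightarrow> xs!i = ys!i"
  from close_iter[OF bary_tuples[OF mean xs] bary_tuples[OF mean ys] contr_step[OF xs ys j eq]]
  have hc: "d (B (Suc m) xs ! 0) (B (Suc m) ys ! 0) \<le> r * d (xs!j) (ys!j)" for m
    by (simp add: funpow_Suc_right del: funpow.simps)
  show "d (L xs) (L ys) \<le> r * d (xs!j) (ys!j)"
    by (rule lim_le[OF B_M[OF xs le0] B_M[OF ys le0] L_prop(1)[OF xs] L_prop(1)[OF ys]
          LIMSEQ_Suc[OF L_prop(2)[OF xs]] LIMSEQ_Suc[OF L_prop(2)[OF ys]] hc])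
qed

lemma rem_rep: "i < n \<Longrightarrow> remove_nth i (replicate n x) = replicate (n - 1) x"
  by (rule nth_equalityI) (auto simp: nth_remove_nth)

lemma bary_rep: "x \<in> M \<Longrightarrow> bary (replicate (Suc k) x) = replicate (Suc k) x"
proof (rule nth_equalityI)
  fix i assume x: "x \<in> M" and i: "i < length (bary (replicate (Suc k) x))"
  then have "i < Suc k" by simp
  then show "bary (replicate (Suc k) x) ! i = replicate (Suc k) x ! i"
    using x mean rem_rep[of i "Suc k" x] by (simp add: is_mean_def del: replicate_Suc)
qed simp

lemma B_rep: "x \<in> M \<Longrightarrow> B m (replicate (Suc k) x) = replicate (Suc k) x"
  by (induction m) (auto simp: bary_rep simp del: replicate_Suc)

lemma L_mean: "is_mean M (Suc k) L"
  unfolding is_mean_def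
proof (intro conjI ballI)
  show "L xs \<in> M" if "xs \<in> T" for xs using L_prop that by blast
  fix x assume x: "x \<in> M"
  have rT: "replicate (Suc k) x \<in> T" using x by (rule replicate_tuples)
  show "L (replicate (Suc k) x) = x"
    by (rule lim_unique[of "\<lambda>m. B m (replicate (Suc k) x) ! 0"])
       (use x L_prop[OF rT] B_M[OF rT] in \<open>auto simp: B_rep simp del: replicate_Suc\<close>)
qed

lemma L_bpred: "bpred M d k mu L"
  unfolding bpred_def
  using L_mean nonexp_continuous[OF L_nonexp] L_all
  by (auto simp: beta_extends_def L_def)

lemma core:
  "bpred M d k mu (beta_ext M d k mu) \<and> nonexpansive_mean M d (Suc k) (beta_ext M d k mu)
   \<and> coord_contractive M d (Suc k) r (beta_ext M d k mu)"
  using beta_ext_eq[OF mean L_bpred] L_bpred L_nonexp L_contr by simp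

end



lemma iter_props:
  assumes ms: "Metric_space M d" and mc: "Metric_space.mcomplete M d" and r: "0 < r" "r < 1" "1 \<le> k"
    and h: "is_mean M k mu" "nonexpansive_mean M d k mu" "coord_contractive M d k r mu"
  shows "is_mean M (k+m) (iter_ext M d k mu m) \<and> nonexpansive_mean M d (k+m) (iter_ext M d k mu m)
     \<and> coord_contractive M d (k+m) r (iter_ext M d k mu m)"
proof (induction m)
  case 0 show ?case using h by simp
next
  case (Suc m)
  then have "bext M d (iter_ext M d k mu m) (k+m) r"
    unfolding bext_def bext_axioms_def using ms mc r by auto
  from bext.core[OF this] show ?case by (simp add: bpred_def)
qed

lemma iter_bpred:
  assumes ms: "Metric_space M d" and mc: "Metric_space.mcomplete M d" and r: "0 < r" "r < 1" "1 \<le> k"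
    and h: "is_mean M k mu" "nonexpansive_mean M d k mu" "coord_contractive M d k r mu"
  shows "bpred M d (k+m) (iter_ext M d k mu m) (iter_ext M d k mu (Suc m))"
proof -
  have "bext M d (iter_ext M d k mu m) (k+m) r"
    unfolding bext_def bext_axioms_def using ms mc r iter_props[OF assms] by auto
  from bext.core[OF this] show ?thesis by simp
qed

lemma prod_ms:
  assumes "Metric_space X d1" "Metric_space Y d2"
  shows "Metric_space (X \<times> Y) (sup_dist d1 d2)"
proof -
  interpret X: Metric_space X d1 by fact
  interpret Y: Metric_space Y d2 by fact
  show ?thesis
  proof
    fix p q r
    show "0 \<le> sup_dist d1 d2 p q" by (simp add: sup_dist_def le_max_iff_disj)
    show "sup_dist d1 d2 p q = sup_dist d1 d2 q p" by (simp add: sup_dist_def X.commute Y.commute)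
    show "(sup_dist d1 d2 p q = 0) = (p = q)" if pq: "p \<in> X \<times> Y" "q \<in> X \<times> Y"
    proof -
      have "sup_dist d1 d2 p q = 0 \<longleftrightarrow> d1 (fst p) (fst q) = 0 \<and> d2 (snd p) (snd q) = 0"
        using X.nonneg[of "fst p" "fst q"] Y.nonneg[of "snd p" "snd q"] unfolding sup_dist_def
        by (smt (verit))
      then show ?thesis using pq by (auto simp: prod_eq_iff mem_Times_iff)
    qed
    assume "p \<in> X \<times> Y" "q \<in> X \<times> Y" "r \<in> X \<times> Y"
    then show "sup_dist d1 d2 p r \<le> sup_dist d1 d2 p q + sup_dist d1 d2 q r"
      using X.triangle[of "fst p" "fst q" "fst r"] Y.triangle[of "snd p" "snd q" "snd r"]
      by (auto simp: sup_dist_def)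
  qed
qed

lemma map_fst_tuples: "zs \<in> tuples (X \<times> Y) n \<Longrightarrow> map fst zs \<in> tuples X n"
  by (auto simp: tuples_def)

lemma map_snd_tuples: "zs \<in> tuples (X \<times> Y) n \<Longrightarrow> map snd zs \<in> tuples Y n"
  by (auto simp: tuples_def)

lemma prod_is_mean:
  assumes "is_mean X n f" "is_mean Y n g"
  shows "is_mean (X \<times> Y) n (prod_mean f g)"
  using assms unfolding is_mean_def prod_mean_def
  by (auto intro: map_fst_tuples map_snd_tuples)

lemma prod_nonexp:
  assumes "nonexpansive_mean X d1 n f" "nonexpansive_mean Y d2 n g" "0 < n"
  shows "nonexpansive_mean (X \<times> Y) (sup_dist d1 d2) n (prod_mean f g)"
  unfolding nonexpansive_mean_def
proof (intro ballI)
  fix xs ys assume xs: "xs \<in> tuples (X \<times> Y) n" and ys: "ys \<in> tuples (X \<times> Y) n"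
  let ?M = "Max {sup_dist d1 d2 (xs!j) (ys!j) | j. j < n}"
  have lx: "length xs = n" "length ys = n" using xs ys tuplesD by blast+
  have "d1 (f (map fst xs)) (f (map fst ys)) \<le> Max {d1 (map fst xs!j) (map fst ys!j) | j. j < n}"
    using assms(1) map_fst_tuples[OF xs] map_fst_tuples[OF ys] unfolding nonexpansive_mean_def by blast
  also have "\<dots> \<le> ?M"
  proof (subst Max_le_iff'[OF assms(3)], intro allI impI)
    fix j assume j: "j < n"
    have "d1 (map fst xs!j) (map fst ys!j) \<le> sup_dist d1 d2 (xs!j) (ys!j)"
      using j lx by (simp add: sup_dist_def)
    also have "\<dots> \<le> ?M" using j by (rule Max_ge')
    finally show "d1 (map fst xs!j) (map fst ys!j) \<le> ?M" .
  qed
  finally have 1: "d1 (f (map fst xs)) (f (map fst ys)) \<le> ?M" .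
  have "d2 (g (map snd xs)) (g (map snd ys)) \<le> Max {d2 (map snd xs!j) (map snd ys!j) | j. j < n}"
    using assms(2) map_snd_tuples[OF xs] map_snd_tuples[OF ys] unfolding nonexpansive_mean_def by blast
  also have "\<dots> \<le> ?M"
  proof (subst Max_le_iff'[OF assms(3)], intro allI impI)
    fix j assume j: "j < n"
    have "d2 (map snd xs!j) (map snd ys!j) \<le> sup_dist d1 d2 (xs!j) (ys!j)"
      using j lx by (simp add: sup_dist_def)
    also have "\<dots> \<le> ?M" using j by (rule Max_ge')
    finally show "d2 (map snd xs!j) (map snd ys!j) \<le> ?M" .
  qed
  finally have 2: "d2 (g (map snd xs)) (g (map snd ys)) \<le> ?M" .
  show "sup_dist d1 d2 (prod_mean f g xs) (prod_mean f g ys) \<le> ?M"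
    using 1 2 by (simp add: sup_dist_def prod_mean_def)
qed

lemma prod_cc:
  assumes "Metric_space X d1" "Metric_space Y d2"
    and "coord_contractive X d1 n r1 f" "coord_contractive Y d2 n r2 g" "0 \<le> r1" "0 \<le> r2"
  shows "coord_contractive (X \<times> Y) (sup_dist d1 d2) n (max r1 r2) (prod_mean f g)"
  unfolding coord_contractive_def
proof (intro ballI allI impI)
  interpret X: Metric_space X d1 by fact
  interpret Y: Metric_space Y d2 by fact
  fix xs ys j assume xs: "xs \<in> tuples (X \<times> Y) n" and ys: "ys \<in> tuples (X \<times> Y) n" and j: "j < n"
    and eq: "\<forall>i<n. i \<noteq> j \<longrightarrow> xs ! i = ys ! i"
  have lx: "length xs = n" "length ys = n" using xs ys tuplesD by blast+
  let ?s = "sup_dist d1 d2 (xs!j) (ys!j)"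
  have "d1 (f (map fst xs)) (f (map fst ys)) \<le> r1 * d1 (map fst xs!j) (map fst ys!j)"
  proof -
    have e: "\<forall>i<n. i \<noteq> j \<longrightarrow> map fst xs ! i = map fst ys ! i" using eq lx by simp
    show ?thesis using assms(3) map_fst_tuples[OF xs] map_fst_tuples[OF ys] j e
      unfolding coord_contractive_def by blast
  qed
  also have "\<dots> \<le> max r1 r2 * ?s"
    using j lx assms(5) by (intro mult_mono) (auto simp: sup_dist_def)
  finally have 1: "d1 (f (map fst xs)) (f (map fst ys)) \<le> max r1 r2 * ?s" .
  have "d2 (g (map snd xs)) (g (map snd ys)) \<le> r2 * d2 (map snd xs!j) (map snd ys!j)"
  proof -
    have e: "\<forall>i<n. i \<noteq> j \<longrightarrow> map snd xs ! i = map snd ys ! i" using eq lx by simp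
    show ?thesis using assms(4) map_snd_tuples[OF xs] map_snd_tuples[OF ys] j e
      unfolding coord_contractive_def by blast
  qed
  also have "\<dots> \<le> max r1 r2 * ?s"
    using j lx assms(6) by (intro mult_mono) (auto simp: sup_dist_def)
  finally have 2: "d2 (g (map snd xs)) (g (map snd ys)) \<le> max r1 r2 * ?s" .
  show "sup_dist d1 d2 (prod_mean f g xs) (prod_mean f g ys) \<le> max r1 r2 * ?s"
    using 1 2 by (simp add: sup_dist_def prod_mean_def)
qed

lemma is_mean_cong: "is_mean S n f \<Longrightarrow> (\<forall>zs\<in>tuples S n. f zs = g zs) \<Longrightarrow> is_mean S n g"
  by (auto simp: is_mean_def replicate_tuples)

lemma nonexp_cong: "nonexpansive_mean S d n f \<Longrightarrow> (\<forall>zs\<in>tuples S n. f zs = g zs) \<Longrightarrow> nonexpansive_mean S d n g"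
  by (auto simp: nonexpansive_mean_def)

lemma cc_cong: "coord_contractive S d n r f \<Longrightarrow> (\<forall>zs\<in>tuples S n. f zs = g zs) \<Longrightarrow> coord_contractive S d n r g"
  by (auto simp: coord_contractive_def)

lemma bary_prod:
  assumes P: "is_mean (X \<times> Y) n P" and agree: "\<forall>zs\<in>tuples (X \<times> Y) n. P zs = prod_mean A B zs"
    and vs: "vs \<in> tuples (X \<times> Y) (Suc n)"
  shows "map fst (barycentric P vs) = barycentric A (map fst vs)"
        "map snd (barycentric P vs) = barycentric B (map snd vs)"
proof -
  have l: "length vs = Suc n" using vs tuplesD by blast
  show "map fst (barycentric P vs) = barycentric A (map fst vs)"
    by (rule nth_equalityI) (use l agree remove_nth_tuples[OF vs] in \<open>auto simp: prod_mean_def map_remove_nth\<close>)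
  show "map snd (barycentric P vs) = barycentric B (map snd vs)"
    by (rule nth_equalityI) (use l agree remove_nth_tuples[OF vs] in \<open>auto simp: prod_mean_def map_remove_nth\<close>)
qed

lemma bary_prod_pow:
  assumes P: "is_mean (X \<times> Y) n P" and agree: "\<forall>zs\<in>tuples (X \<times> Y) n. P zs = prod_mean A B zs"
    and vs: "vs \<in> tuples (X \<times> Y) (Suc n)"
  shows "map fst ((barycentric P ^^ j) vs) = (barycentric A ^^ j) (map fst vs) \<and>
         map snd ((barycentric P ^^ j) vs) = (barycentric B ^^ j) (map snd vs)"
proof (induction j)
  case 0 show ?case by simp
next
  case (Suc j)
  have "(barycentric P ^^ j) vs \<in> tuples (X \<times> Y) (Suc n)" using bary_pow_tuples[OF P vs] .
  from bary_prod[OF P agree this] Suc show ?case by simp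
qed


theorem theorem7p5:
  fixes X :: "'a set" and d1 :: "'a \<Rightarrow> 'a \<Rightarrow> real"
    and Y :: "'b set" and d2 :: "'b \<Rightarrow> 'b \<Rightarrow> real"
    and \<mu> :: "'a list \<Rightarrow> 'a" and \<nu> :: "'b list \<Rightarrow> 'b"
    and k :: nat and \<rho> \<rho>' :: real
  assumes "Metric_space X d1" and "Metric_space.mcomplete X d1"
    and "Metric_space Y d2" and "Metric_space.mcomplete Y d2"
    and "k \<ge> 2"
    and "0 < \<rho>" and "\<rho> < 1" and "0 < \<rho>'" and "\<rho>' < 1"
    and "is_mean X k \<mu>" and "nonexpansive_mean X d1 k \<mu>" and "coord_contractive X d1 k \<rho> \<mu>"
    and "is_mean Y k \<nu>" and "nonexpansive_mean Y d2 k \<nu>" and "coord_contractive Y d2 k \<rho>' \<nu>"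
  shows "is_mean (X \<times> Y) k (prod_mean \<mu> \<nu>)
    \<and> nonexpansive_mean (X \<times> Y) (sup_dist d1 d2) k (prod_mean \<mu> \<nu>)
    \<and> coord_contractive (X \<times> Y) (sup_dist d1 d2) k (max \<rho> \<rho>') (prod_mean \<mu> \<nu>)
    \<and> (\<forall>n\<ge>k. \<forall>zs\<in>tuples (X \<times> Y) n.
         iter_ext (X \<times> Y) (sup_dist d1 d2) k (prod_mean \<mu> \<nu>) (n - k) zs
           = prod_mean (iter_ext X d1 k \<mu> (n - k)) (iter_ext Y d2 k \<nu> (n - k)) zs)"
proof -
  note as = assms
  have k1: "1 \<le> k" using as(5) by simp
  note propsA = iter_props[OF as(1,2,6,7) k1 as(10,11,12)]
  note propsB = iter_props[OF as(3,4,8,9) k1 as(13,14,15)]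
  note bpA = iter_bpred[OF as(1,2,6,7) k1 as(10,11,12)]
  note bpB = iter_bpred[OF as(3,4,8,9) k1 as(13,14,15)]
  have c1: "is_mean (X \<times> Y) k (prod_mean \<mu> \<nu>)" using prod_is_mean as(10,13) .
  have c2: "nonexpansive_mean (X \<times> Y) (sup_dist d1 d2) k (prod_mean \<mu> \<nu>)"
    using prod_nonexp[OF as(11,14)] k1 by simp
  have c3: "coord_contractive (X \<times> Y) (sup_dist d1 d2) k (max \<rho> \<rho>') (prod_mean \<mu> \<nu>)"
    using prod_cc[OF as(1,3,12,15)] as(6,8) by simp
  define A where "A m = iter_ext X d1 k \<mu> m" for m
  define B where "B m = iter_ext Y d2 k \<nu> m" for m
  define P where "P m = iter_ext (X \<times> Y) (sup_dist d1 d2) k (prod_mean \<mu> \<nu>) m" for m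
  have main: "\<forall>zs\<in>tuples (X \<times> Y) (k+m). P m zs = prod_mean (A m) (B m) zs" for m
  proof (induction m)
    case 0 show ?case by (simp add: P_def A_def B_def)
  next
    case (Suc m)
    have PA: "is_mean (X \<times> Y) (k+m) (P m)"
      by (rule is_mean_cong[OF prod_is_mean[of X "k+m" "A m" Y "B m"]])
         (use propsA propsB Suc.IH in \<open>auto simp: A_def B_def\<close>)
    define Q where "Q zs = (if zs \<in> tuples (X \<times> Y) (Suc (k+m))
        then prod_mean (A (Suc m)) (B (Suc m)) zs else undefined)" for zs
    have bA: "bpred X d1 (k+m) (A m) (A (Suc m))" using bpA by (simp add: A_def)
    have bB: "bpred Y d2 (k+m) (B m) (B (Suc m))" using bpB by (simp add: B_def)
    have agreeQ: "\<forall>zs\<in>tuples (X \<times> Y) (Suc (k+m)). prod_mean (A (Suc m)) (B (Suc m)) zs = Q zs"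
      by (simp add: Q_def)
    have neA: "nonexpansive_mean X d1 (Suc (k+m)) (A (Suc m))"
      using propsA[of "Suc m"] by (simp add: A_def)
    have neB: "nonexpansive_mean Y d2 (Suc (k+m)) (B (Suc m))"
      using propsB[of "Suc m"] by (simp add: B_def)
    have Qb: "bpred (X \<times> Y) (sup_dist d1 d2) (k+m) (P m) Q"
      unfolding bpred_def
    proof (intro conjI)
      show "is_mean (X \<times> Y) (Suc (k + m)) Q"
        using is_mean_cong[OF prod_is_mean agreeQ] bA bB by (auto simp: bpred_def)
      show "continuous_mean (X \<times> Y) (sup_dist d1 d2) (Suc (k + m)) Q"
        by (rule nonexp_continuous[OF nonexp_cong[OF prod_nonexp[OF neA neB] agreeQ]]) simp_all
      show "\<forall>xs. xs \<notin> tuples (X \<times> Y) (Suc (k + m)) \<longrightarrow> Q xs = undefined"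
        by (simp add: Q_def)
      show "beta_extends (X \<times> Y) (sup_dist d1 d2) (k + m) (P m) Q"
        unfolding beta_extends_def
      proof (intro ballI allI impI)
        fix zs i assume zs: "zs \<in> tuples (X \<times> Y) (Suc (k + m))" and i: "i < Suc (k + m)"
        have e1: "(\<lambda>j. d1 ((barycentric (A m) ^^ j) (map fst zs) ! i) (A (Suc m) (map fst zs))) \<longlonglongrightarrow> 0"
          using bA map_fst_tuples[OF zs] i unfolding bpred_def beta_extends_def by blast
        have e2: "(\<lambda>j. d2 ((barycentric (B m) ^^ j) (map snd zs) ! i) (B (Suc m) (map snd zs))) \<longlonglongrightarrow> 0"
          using bB map_snd_tuples[OF zs] i unfolding bpred_def beta_extends_def by blast
        have eq: "sup_dist d1 d2 ((barycentric (P m) ^^ j) zs ! i) (Q zs)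
          = max (d1 ((barycentric (A m) ^^ j) (map fst zs) ! i) (A (Suc m) (map fst zs)))
                (d2 ((barycentric (B m) ^^ j) (map snd zs) ! i) (B (Suc m) (map snd zs)))" for j
        proof -
          have len: "length ((barycentric (P m) ^^ j) zs) = Suc (k+m)"
            using tuplesD(1)[OF bary_pow_tuples[OF PA zs]] .
          have h: "map fst ((barycentric (P m) ^^ j) zs) = (barycentric (A m) ^^ j) (map fst zs)"
                  "map snd ((barycentric (P m) ^^ j) zs) = (barycentric (B m) ^^ j) (map snd zs)"
            using bary_prod_pow[OF PA Suc.IH zs] by auto
          have "fst ((barycentric (P m) ^^ j) zs ! i) = (barycentric (A m) ^^ j) (map fst zs) ! i"
               "snd ((barycentric (P m) ^^ j) zs ! i) = (barycentric (B m) ^^ j) (map snd zs) ! i"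
            using h[symmetric] len i by auto
          then show ?thesis using zs by (simp add: sup_dist_def Q_def prod_mean_def)
        qed
        show "(\<lambda>j. sup_dist d1 d2 ((barycentric (P m) ^^ j) zs ! i) (Q zs)) \<longlonglongrightarrow> 0"
          unfolding eq using tendsto_max[OF e1 e2] by simp
      qed
    qed
    have "P (Suc m) = beta_ext (X \<times> Y) (sup_dist d1 d2) (k+m) (P m)" by (simp add: P_def)
    also have "\<dots> = Q" by (rule Metric_space.beta_ext_eq[OF prod_ms[OF as(1,3)] PA Qb])
    finally show ?case by (simp add: Q_def)
  qed
  have c4: "\<forall>n\<ge>k. \<forall>zs\<in>tuples (X \<times> Y) n.
         iter_ext (X \<times> Y) (sup_dist d1 d2) k (prod_mean \<mu> \<nu>) (n - k) zs
           = prod_mean (iter_ext X d1 k \<mu> (n - k)) (iter_ext Y d2 k \<nu> (n - k)) zs"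
  proof (intro allI impI ballI)
    fix n zs assume n: "k \<le> n" and zs: "zs \<in> tuples (X \<times> Y) n"
    then have "zs \<in> tuples (X \<times> Y) (k + (n - k))" by simp
    from main[of "n - k"] this show "iter_ext (X \<times> Y) (sup_dist d1 d2) k (prod_mean \<mu> \<nu>) (n - k) zs
           = prod_mean (iter_ext X d1 k \<mu> (n - k)) (iter_ext Y d2 k \<nu> (n - k)) zs"
      by (simp add: P_def A_def B_def)
  qed
  show ?thesis using c1 c2 c3 c4 by blast
qed


end
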